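(* Let $\Pi_n$ be a PARITY$_n$ program such that no rule $y\leftarrow B$ of $\Pi_n$ has $y\in var(B)$ and every rule body of $\Pi_n$ is consistent. Then there is a standard PARITY$_n$ program $\Pi_n'$ (again with no rule $y\leftarrow B$ having $y\in var(B)$ and with all bodies consistent) such that $|\Pi_n'|\le|\Pi_n|$.
   Context: A rule element is one of $\top$, $\bot$, $x$, $not\ x$, $not\ not\ x$, where $x$ is a variable. A (canonical) rule is $H\leftarrow B$ with $H$ a variable or $\bot$ and $B$ a finite set of rule elements; a canonical program is a finite set of rules. For a body $B$, $var(B)=\{e\in B: e\text{ is a variable}\}$. For a set of variables $I$: $I\models\top$; $I\not\models\bot$; $I\models x$ iff $I\models not\ not\ x$ iff $x\in I$; $I\models not\ x$ iff $x\notin I$; $I\models B$ iff $I$ satisfies every element of $B$; $I$ is closed under $H\leftarrow B$ if $I\models B$ implies $I\models H$. The reduct $\Pi^I$ replaces $not\ not\ x$ by $\top$ if $x\in I$ else $\bot$, and $not\ x$ by $\top$ if $x\notin I$ else $\bot$; $I$ is an answer set of $\Pi$ if $I$ is the least set closed under all rules of $\Pi^I$; $Ans(\Pi)$ is the set of answer sets; $var(\Pi)$ the set of variables occurring in $\Pi$; $|\Pi|$ the number of rules. Strings $w\in\{0,1\}^n$ are identified with $\{x_i:w_i=1\}$; PARITY$_n$ is the set of strings in $\{0,1\}^n$ with an odd number of 1's; a PARITY$_n$ program is a canonical program $\Pi$ with $var(\Pi)=\{x_1,\dots,x_n\}$ and $Ans(\Pi)=$ PARITY$_n$. For a set $B$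 of rule elements, $S(B)=\{I\subseteq\{x_1,\dots,x_n\}: I\models B\}$; $B$ is consistent if $S(B)\neq\emptyset$. A PARITY$_n$ program $\Pi$ is standard if for every rule $x\leftarrow B\in\Pi$ with head a variable $x$: whenever $S(B\cup\{x\})$ has exactly one element, $not\ not\ x\notin B$. *)

theory Defs
  imports Main
begin

text \<open>Variables are natural numbers; variable x_i is the number i.\<close>

datatype elem = ETop | EBot | Pos nat | Neg nat | NNeg nat
  (* \<top>, \<bot>, x, not x, not not x *)

datatype head = HVar nat | HBot

type_synonym rule = "head \<times> elem set"
type_synonym program = "rule set"

definition canonical :: "program \<Rightarrow> bool" where
  "canonical P \<longleftrightarrow> finite P \<and> (\<forall>r\<in>P. finite (snd r))"

fun sat_elem :: "nat set \<Rightarrow> elem \<Rightarrow> bool" where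
  "sat_elem I ETop = True"
| "sat_elem I EBot = False"
| "sat_elem I (Pos x) = (x \<in> I)"
| "sat_elem I (Neg x) = (x \<notin> I)"
| "sat_elem I (NNeg x) = (x \<in> I)"

definition sat_body :: "nat set \<Rightarrow> elem set \<Rightarrow> bool" where
  "sat_body I B \<longleftrightarrow> (\<forall>e\<in>B. sat_elem I e)"

fun sat_head :: "nat set \<Rightarrow> head \<Rightarrow> bool" where
  "sat_head I (HVar x) = (x \<in> I)"
| "sat_head I HBot = False"

definition closed_under :: "nat set \<Rightarrow> program \<Rightarrow> bool" where
  "closed_under I P \<longleftrightarrow> (\<forall>(H, B)\<in>P. sat_body I B \<longrightarrow> sat_head I H)"

fun reduct_elem :: "nat set \<Rightarrow> elem \<Rightarrow> elem" where
  "reduct_elem I (NNeg x) = (if x \<in> I then ETop else EBot)"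
| "reduct_elem I (Neg x) = (if x \<notin> I then ETop else EBot)"
| "reduct_elem I e = e"

definition reduct :: "program \<Rightarrow> nat set \<Rightarrow> program" where
  "reduct P I = (\<lambda>(H, B). (H, reduct_elem I ` B)) ` P"

definition answer_set :: "program \<Rightarrow> nat set \<Rightarrow> bool" where
  "answer_set P I \<longleftrightarrow> closed_under I (reduct P I) \<and>
     (\<forall>J. closed_under J (reduct P I) \<longrightarrow> I \<subseteq> J)"

definition Ans :: "program \<Rightarrow> nat set set" where
  "Ans P = {I. answer_set P I}"

fun elem_vars :: "elem \<Rightarrow> nat set" where
  "elem_vars (Pos x) = {x}"
| "elem_vars (Neg x) = {x}"
| "elem_vars (NNeg x) = {x}"
| "elem_vars _ = {}"

fun head_vars :: "head \<Rightarrow> nat set" where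
  "head_vars (HVar x) = {x}"
| "head_vars HBot = {}"

definition prog_vars :: "program \<Rightarrow> nat set" where
  "prog_vars P = (\<Union>(H, B)\<in>P. head_vars H \<union> (\<Union>e\<in>B. elem_vars e))"

text \<open>var(B): the elements of B that are (plain) variables.\<close>
definition body_var :: "elem set \<Rightarrow> nat set" where
  "body_var B = {x. Pos x \<in> B}"

definition PARITY :: "nat \<Rightarrow> nat set set" where
  "PARITY n = {I. I \<subseteq> {1..n} \<and> odd (card I)}"

definition parity_program :: "nat \<Rightarrow> program \<Rightarrow> bool" where
  "parity_program n P \<longleftrightarrow> canonical P \<and> prog_vars P = {1..n} \<and> Ans P = PARITY n"

definition S :: "nat \<Rightarrow> elem set \<Rightarrow> nat set set" where
  "S n B = {I. I \<subseteq> {1..n} \<and> sat_body I B}"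

definition consistent :: "nat \<Rightarrow> elem set \<Rightarrow> bool" where
  "consistent n B \<longleftrightarrow> S n B \<noteq> {}"

definition standard :: "nat \<Rightarrow> program \<Rightarrow> bool" where
  "standard n P \<longleftrightarrow> parity_program n P \<and>
     (\<forall>x B. (HVar x, B) \<in> P \<longrightarrow> card (S n (insert (Pos x) B)) = 1 \<longrightarrow> NNeg x \<notin> B)"

definition no_self_dep :: "program \<Rightarrow> bool" where
  "no_self_dep P \<longleftrightarrow> (\<forall>y B. (HVar y, B) \<in> P \<longrightarrow> y \<notin> body_var B)"

definition bodies_consistent :: "nat \<Rightarrow> program \<Rightarrow> bool" where
  "bodies_consistent n P \<longleftrightarrow> (\<forall>(H, B)\<in>P. consistent n B)"

end

theory Submission
  imports Defs
begin

definition rr :: "nat set \<Rightarrow> rule \<Rightarrow> rule" where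
  "rr I = (\<lambda>(H,B). (H, reduct_elem I ` B))"
definition cl :: "nat set \<Rightarrow> rule \<Rightarrow> bool" where
  "cl J = (\<lambda>(H,B). sat_body J B \<longrightarrow> sat_head J H)"

lemma cl_rr[simp]: "cl J (rr I (H,B)) = (sat_body J (reduct_elem I ` B) \<longrightarrow> sat_head J H)"
  by (simp add: cl_def rr_def)

lemma reduct_insert: "reduct (insert r Q) I = insert (rr I r) (reduct Q I)"
  by (simp add: reduct_def rr_def)

lemma closed_insert: "closed_under J (insert q Q) = (cl J q \<and> closed_under J Q)"
  by (cases q) (simp add: closed_under_def cl_def)

lemma closed_red: "closed_under J (reduct Q I) \<longleftrightarrow>
   (\<forall>H B. (H,B) \<in> Q \<longrightarrow> sat_body J (reduct_elem I ` B) \<longrightarrow> sat_head J H)"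
  by (auto simp: closed_under_def reduct_def)

lemma sat_red_mono: "J \<subseteq> K \<Longrightarrow> sat_elem J (reduct_elem I e) \<Longrightarrow> sat_elem K (reduct_elem I e)"
  by (cases e) (auto split: if_splits)

lemma sat_body_red_mono: "J \<subseteq> K \<Longrightarrow> sat_body J (reduct_elem I ` C) \<Longrightarrow> sat_body K (reduct_elem I ` C)"
  using sat_red_mono by (auto simp: sat_body_def)

lemma sat_red_self: "sat_elem I (reduct_elem I e) = sat_elem I e"
  by (cases e) auto

lemma sat_body_red_self: "sat_body I (reduct_elem I ` C) = sat_body I C"
  by (simp add: sat_body_def sat_red_self)

lemma closed_inter:
  assumes "closed_under J (reduct Q I)" "closed_under I (reduct Q I)"
  shows "closed_under (J \<inter> I) (reduct Q I)"
  unfolding closed_red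
proof (intro allI impI)
  fix H B assume hb: "(H,B) \<in> Q" and s: "sat_body (J \<inter> I) (reduct_elem I ` B)"
  have "sat_body J (reduct_elem I ` B)" "sat_body I (reduct_elem I ` B)"
    using s sat_body_red_mono by blast+
  hence "sat_head J H" "sat_head I H" using assms hb unfolding closed_red by blast+
  thus "sat_head (J \<inter> I) H" by (cases H) auto
qed

lemma ansA:
  assumes h: "\<forall>J\<subseteq>I. cl J (rr I r) \<and> cl J (rr I r')" and a: "answer_set (insert r Q) I"
  shows "answer_set (insert r' Q) I"
proof -
  from a have c1: "closed_under I (reduct Q I)"
    and c2: "\<forall>J. closed_under J (reduct (insert r Q) I) \<longrightarrow> I \<subseteq> J"
    by (auto simp: answer_set_def reduct_insert closed_insert)
  have "closed_under I (reduct (insert r' Q) I)" using h c1 by (simp add: reduct_insert closed_insert)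
  moreover have "I \<subseteq> J" if "closed_under J (reduct (insert r' Q) I)" for J
  proof -
    have "closed_under J (reduct Q I)" using that by (simp add: reduct_insert closed_insert)
    hence "closed_under (J\<inter>I) (reduct Q I)" using c1 closed_inter by blast
    moreover have "cl (J\<inter>I) (rr I r)" using h by blast
    ultimately have "closed_under (J\<inter>I) (reduct (insert r Q) I)" by (simp add: reduct_insert closed_insert)
    thus ?thesis using c2 by blast
  qed
  ultimately show ?thesis by (simp add: answer_set_def)
qed

lemma ansEq:
  assumes "r \<in> P" "\<forall>J\<subseteq>I. cl J (rr I r) \<and> cl J (rr I r')"
  shows "answer_set P I = answer_set (insert r' (P-{r})) I"
proof -
  have h2: "\<forall>J\<subseteq>I. cl J (rr I r') \<and> cl J (rr I r)" using assms(2) by blast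
  show ?thesis using ansA[OF assms(2), of "P-{r}"] ansA[OF h2, of "P-{r}"] insert_Diff[OF assms(1)]
    by auto
qed

lemma ans_vars:
  assumes "answer_set Q I" shows "I \<subseteq> prog_vars Q"
proof -
  let ?J = "I \<inter> prog_vars Q"
  have cI: "closed_under I (reduct Q I)" and m: "\<forall>J. closed_under J (reduct Q I) \<longrightarrow> I \<subseteq> J"
    using assms by (auto simp: answer_set_def)
  have "closed_under ?J (reduct Q I)"
    unfolding closed_red
  proof (intro allI impI)
    fix H B assume hb: "(H,B) \<in> Q" and s: "sat_body ?J (reduct_elem I ` B)"
    have "sat_body I (reduct_elem I ` B)" using s sat_body_red_mono by blast
    hence "sat_head I H" using cI hb unfolding closed_red by blast
    moreover have "head_vars H \<subseteq> prog_vars Q" using hb by (auto simp: prog_vars_def)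
    ultimately show "sat_head ?J H" by (cases H) auto
  qed
  thus ?thesis using m by blast
qed

lemma ansB:
  assumes "r \<in> P" "\<forall>J. cl J (rr I r) = cl J (rr I r')"
  shows "answer_set P I = answer_set (insert r' (P-{r})) I"
proof -
  have "closed_under J (reduct P I) = closed_under J (reduct (insert r' (P-{r})) I)" for J
    using assms insert_Diff[OF assms(1)]
    by (metis closed_insert reduct_insert)
  thus ?thesis by (simp add: answer_set_def)
qed

definition badR :: "nat \<Rightarrow> program \<Rightarrow> rule set" where
  "badR n P = {r \<in> P. \<exists>x B. r = (HVar x, B) \<and> card (S n (insert (Pos x) B)) = 1 \<and> NNeg x \<in> B}"

lemma prog_vars_insert: "prog_vars (insert (H,B) Q) = head_vars H \<union> (\<Union>e\<in>B. elem_vars e) \<union> prog_vars Q"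
  by (auto simp: prog_vars_def)

lemma sat_insert_indep: "x \<notin> elem_vars e \<Longrightarrow> sat_elem (insert x I) e = sat_elem I e"
  by (cases e) auto

lemma elem_vars_x: "x \<in> elem_vars e \<Longrightarrow> e = Pos x \<or> e = Neg x \<or> e = NNeg x"
  by (cases e) auto

lemma replace:
  assumes pp: "parity_program n P" and nsd: "no_self_dep P" and bc: "bodies_consistent n P"
    and rP: "r \<in> badR n P" and fB': "finite B'"
    and vars: "prog_vars (insert (H',B') (P-{r})) = prog_vars P"
    and ans: "\<forall>I. answer_set P I = answer_set (insert (H',B') (P-{r})) I"
    and nsd': "\<forall>y. H' = HVar y \<longrightarrow> y \<notin> body_var B'"
    and cons': "consistent n B'"
    and nb: "\<not>(\<exists>x. H' = HVar x \<and> card (S n (insert (Pos x) B')) = 1 \<and> NNeg x \<in> B')"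
  shows "\<exists>P'. parity_program n P' \<and> no_self_dep P' \<and> bodies_consistent n P' \<and> card P' \<le> card P
     \<and> badR n P' \<subseteq> badR n P - {r}"
proof (intro exI conjI)
  let ?P' = "insert (H',B') (P-{r})"
  have r: "r \<in> P" using rP by (simp add: badR_def)
  have fP: "finite P" and fb: "\<forall>q\<in>P. finite (snd q)" using pp by (auto simp: parity_program_def canonical_def)
  show "parity_program n ?P'"
  proof -
    have "canonical ?P'" using fP fb fB' by (auto simp: canonical_def)
    moreover have "Ans ?P' = Ans P" using ans by (auto simp: Ans_def)
    ultimately show ?thesis using pp vars by (simp add: parity_program_def)
  qed
  show "no_self_dep ?P'" using nsd nsd' by (auto simp: no_self_dep_def)
  show "bodies_consistent n ?P'" using bc cons' by (auto simp: bodies_consistent_def)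
  show "card ?P' \<le> card P"
  proof (rule card_insert_le_m1)
    show "card P > 0" using fP r card_gt_0_iff by blast
    show "card (P-{r}) \<le> card P - 1" using r by (simp add: card_Diff_singleton)
  qed
  show "badR n ?P' \<subseteq> badR n P - {r}" using nb by (auto simp: badR_def)
qed

lemma step:
  assumes pp: "parity_program n P" and nsd: "no_self_dep P" and bc: "bodies_consistent n P"
    and rb: "r \<in> badR n P"
  shows "\<exists>P'. parity_program n P' \<and> no_self_dep P' \<and> bodies_consistent n P' \<and> card P' \<le> card P
     \<and> badR n P' \<subseteq> badR n P - {r}"
proof -
  obtain x B where rdef: "r = (HVar x, B)" and rP: "(HVar x, B) \<in> P"
    and c1: "card (S n (insert (Pos x) B)) = 1" and nx: "NNeg x \<in> B"
    using rb by (auto simp: badR_def)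
  have SS: "S n (insert (Pos x) B) = S n B" using nx by (auto simp: S_def sat_body_def)
  from c1 SS have "card (S n B) = 1" by simp
  then obtain I0 where I0: "S n B = {I0}" by (rule card_1_singletonE)
  have I0n: "I0 \<subseteq> {1..n}" and sI0: "sat_body I0 B" using I0 by (auto simp: S_def)
  have xI0: "x \<in> I0" using sI0 nx by (auto simp: sat_body_def)
  have fP: "finite P" and fB: "finite B"
    using pp rP by (auto simp: parity_program_def canonical_def)
  have px: "Pos x \<notin> B" using nsd rP by (auto simp: no_self_dep_def body_var_def)
  have ngx: "Neg x \<notin> B" using sI0 xI0 by (auto simp: sat_body_def)
  have pv: "prog_vars P = {1..n}" and AP: "Ans P = PARITY n" using pp by (auto simp: parity_program_def)
  have Pins: "P = insert r (P - {r})" using rP rdef by auto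
  have sub: "answer_set Q I \<Longrightarrow> prog_vars Q = {1..n} \<Longrightarrow> I \<subseteq> {1..n}" for Q I
    using ans_vars by blast
  have notP: "\<not> answer_set P I" if "even (card I)" for I
    using that AP by (auto simp: Ans_def PARITY_def)
  show ?thesis
  proof (cases "odd (card I0)")
    case True
    define B' where "B' = B - {NNeg x}"
    have BB': "B = insert (NNeg x) B'" using nx by (auto simp: B'_def)
    have nB': "NNeg x \<notin> B'" by (simp add: B'_def)
    have vars: "prog_vars (insert (HVar x,B') (P-{r})) = prog_vars P"
      apply (subst (2) Pins) unfolding rdef prog_vars_insert BB' by auto
    have ans: "\<forall>I. answer_set P I = answer_set (insert (HVar x,B') (P-{r})) I"
    proof
      fix I
      show "answer_set P I = answer_set (insert (HVar x,B') (P-{r})) I"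
      proof (cases "I \<subseteq> {1..n}")
        case False
        thus ?thesis using sub[of P I] sub[of "insert (HVar x,B') (P-{r})" I] pv vars by auto
      next
        case In: True
        show ?thesis
        proof (cases "x \<in> I")
          case True
          have "reduct_elem I ` B = insert ETop (reduct_elem I ` B')" using True BB' by simp
          hence "\<forall>J. cl J (rr I r) = cl J (rr I (HVar x,B'))" unfolding rdef by (simp add: sat_body_def)
          thus ?thesis using ansB rP rdef by blast
        next
          case xI: False
          show ?thesis
          proof (cases "sat_body I B'")
            case True
            have "sat_body (insert x I) B" unfolding sat_body_def
            proof
              fix e assume eB: "e \<in> B"
              show "sat_elem (insert x I) e"
              proof (cases "e = NNeg x")
                case False
                hence eB': "e \<in> B'" using eB BB' by auto
                have "x \<notin> elem_vars e" using elem_vars_x[of x e] eB px ngx False by auto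
                thus ?thesis using sat_insert_indep True eB' by (auto simp: sat_body_def)
              qed simp
            qed
            moreover have "insert x I \<subseteq> {1..n}" using In xI0 I0n by auto
            ultimately have "insert x I \<in> S n B" by (simp add: S_def)
            hence eqI: "insert x I = I0" using I0 by auto
            have fI0: "finite I0" using I0n finite_subset by blast
            have fI: "finite I" using In finite_subset by blast
            have "card I0 = Suc (card I)" unfolding eqI[symmetric] using xI fI by simp
            hence ev: "even (card I)" using \<open>odd (card I0)\<close> by simp
            have "\<not> answer_set (insert (HVar x,B') (P-{r})) I"
            proof
              assume "answer_set (insert (HVar x,B') (P-{r})) I"
              hence "cl I (rr I (HVar x,B'))" by (simp add: answer_set_def reduct_insert closed_insert)
              thus False using True xI by (simp add: sat_body_red_self)
            qed
            thus ?thesis using notP[OF ev] by simp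
          next
            case False
            have "\<forall>J\<subseteq>I. cl J (rr I r) \<and> cl J (rr I (HVar x,B'))"
            proof (intro allI impI conjI)
              fix J assume "J \<subseteq> I"
              show "cl J (rr I r)" using xI nx unfolding rdef by (auto simp: sat_body_def)
              have "\<not> sat_body J (reduct_elem I ` B')" using False \<open>J \<subseteq> I\<close> sat_body_red_mono sat_body_red_self by blast
              thus "cl J (rr I (HVar x,B'))" by simp
            qed
            thus ?thesis using ansEq rP rdef by blast
          qed
        qed
      qed
    qed
    show ?thesis
    proof (rule replace[OF pp nsd bc rb _ vars ans])
      show "finite B'" using fB by (simp add: B'_def)
      show "\<forall>y. HVar x = HVar y \<longrightarrow> y \<notin> body_var B'" using px by (simp add: body_var_def B'_def)
      have "I0 \<in> S n B'" using I0n sI0 by (simp add: S_def sat_body_def B'_def)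
      thus "consistent n B'" by (auto simp: consistent_def)
      show "\<not>(\<exists>y. HVar x = HVar y \<and> card (S n (insert (Pos y) B')) = 1 \<and> NNeg y \<in> B')" using nB' by blast
    qed
  next
    case False
    have vars: "prog_vars (insert (HBot,B) (P-{r})) = prog_vars P"
    proof -
      have "x \<in> (\<Union>e\<in>B. elem_vars e)" using nx by (intro UN_I[of "NNeg x"]) auto
      thus ?thesis apply (subst (2) Pins) unfolding rdef prog_vars_insert by auto
    qed
    have ans: "\<forall>I. answer_set P I = answer_set (insert (HBot,B) (P-{r})) I"
    proof
      fix I
      show "answer_set P I = answer_set (insert (HBot,B) (P-{r})) I"
      proof (cases "I \<subseteq> {1..n}")
        case False
        thus ?thesis using sub[of P I] sub[of "insert (HBot,B) (P-{r})" I] pv vars by auto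
      next
        case In: True
        show ?thesis
        proof (cases "sat_body I B")
          case True
          hence "I \<in> S n B" using In by (simp add: S_def)
          hence "I = I0" using I0 by auto
          hence ev: "even (card I)" using False by simp
          have "\<not> answer_set (insert (HBot,B) (P-{r})) I"
          proof
            assume "answer_set (insert (HBot,B) (P-{r})) I"
            hence "cl I (rr I (HBot,B))" by (simp add: answer_set_def reduct_insert closed_insert)
            thus False using True by (simp add: sat_body_red_self)
          qed
          thus ?thesis using notP[OF ev] by simp
        next
          case nsat: False
          have "\<forall>J\<subseteq>I. cl J (rr I r) \<and> cl J (rr I (HBot,B))"
          proof (intro allI impI conjI)
            fix J assume "J \<subseteq> I"
            have "\<not> sat_body J (reduct_elem I ` B)" using nsat \<open>J \<subseteq> I\<close> sat_body_red_mono sat_body_red_self by blast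
            thus "cl J (rr I r)" "cl J (rr I (HBot,B))" unfolding rdef by simp_all
          qed
          thus ?thesis using ansEq rP rdef by blast
        qed
      qed
    qed
    show ?thesis
    proof (rule replace[OF pp nsd bc rb fB vars ans])
      show "\<forall>y. HBot = HVar y \<longrightarrow> y \<notin> body_var B" by simp
      show "consistent n B" using I0 by (auto simp: consistent_def)
      show "\<not>(\<exists>y. HBot = HVar y \<and> card (S n (insert (Pos y) B)) = 1 \<and> NNeg y \<in> B)" by simp
    qed
  qed
qed


lemma main_ind:
  "\<forall>P. card (badR n P) = k \<longrightarrow> parity_program n P \<longrightarrow> no_self_dep P \<longrightarrow> bodies_consistent n P \<longrightarrow>
     (\<exists>P'. standard n P' \<and> no_self_dep P' \<and> bodies_consistent n P' \<and> card P' \<le> card P)"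
proof (induction k rule: less_induct)
  case (less k)
  show ?case
  proof (intro allI impI)
    fix P assume ck: "card (badR n P) = k" and pp: "parity_program n P" and nsd: "no_self_dep P"
      and bc: "bodies_consistent n P"
    have fin: "finite (badR n P)"
    proof -
      have "finite P" using pp by (simp add: parity_program_def canonical_def)
      thus ?thesis by (rule finite_subset[rotated]) (auto simp: badR_def)
    qed
    show "\<exists>P'. standard n P' \<and> no_self_dep P' \<and> bodies_consistent n P' \<and> card P' \<le> card P"
    proof (cases "badR n P = {}")
      case True
      have "standard n P" unfolding standard_def
      proof (intro conjI allI impI)
        show "parity_program n P" by (rule pp)
        fix x B assume "(HVar x, B) \<in> P" "card (S n (insert (Pos x) B)) = 1"
        thus "NNeg x \<notin> B" using True unfolding badR_def by blast
      qed
      thus ?thesis using nsd bc by blast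
    next
      case False
      then obtain r where r: "r \<in> badR n P" by blast
      obtain P' where P': "parity_program n P'" "no_self_dep P'" "bodies_consistent n P'" "card P' \<le> card P"
        "badR n P' \<subseteq> badR n P - {r}" using step[OF pp nsd bc r] by blast
      have "badR n P' \<subset> badR n P" using P'(5) r by blast
      hence "card (badR n P') < k" using ck fin psubset_card_mono by blast
      then obtain P'' where "standard n P''" "no_self_dep P''" "bodies_consistent n P''" "card P'' \<le> card P'"
        using less.IH P'(1-3) by blast
      thus ?thesis using P'(4) by (meson le_trans)
    qed
  qed
qed

theorem mainTheorem12:
  fixes n :: nat and P :: program
  assumes "parity_program n P"
    and "no_self_dep P"
    and "bodies_consistent n P"
  shows "\<exists>P'. standard n P' \<and> no_self_dep P' \<and> bodies_consistent n P' \<and> card P' \<le> card P"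
  using main_ind assms by blast

end
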